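(* Let $d=1$ and $V:\mathbb{R}\to\mathbb{R}$ Borel. The following are equivalent: (a) $V\in\mathcal K_1$; (b) $V\in\widehat{\mathcal K}_1$; (c) $\sup_{x\in\mathbb{R}}\int_{|z-x|\le1}|V(z)|\,dz<\infty$; (d) $\lim_{T\to0^+}\|S(V)\|_{T,\infty}=0$; (e) $\|S(V)\|_{T,\infty}<\infty$ for some (equivalently, every) $T>0$.
   Context: $g(t,x,y)=(4\pi t)^{-d/2}e^{-|y-x|^2/(4t)}$. $S(V,t,x,y)=\int_0^t\int_{\mathbb{R}^d}\frac{g(s,x,z)g(t-s,z,y)}{g(t,x,y)}|V(z)|\,dz\,ds$, $\|S(V)\|_{T,\infty}=\sup_{0<t\le T}\sup_{x,y}S(V,t,x,y)$. $V\in\mathcal K_d$ (Kato class) means $\lim_{t\to0^+}\sup_{x}\int_0^t\int_{\mathbb{R}^d}g(s,x,z)|V(z)|\,dz\,ds=0$; $V\in\widehat{\mathcal K}_d$ (enlarged Kato class) means $\sup_x\int_0^t\int_{\mathbb{R}^d}g(s,x,z)|V(z)|\,dz\,ds<\infty$ for some (equivalently every) $t>0$. *)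

theory Defs
  imports "HOL-Analysis.Analysis"
begin

definition gauss :: "real \<Rightarrow> real \<Rightarrow> real \<Rightarrow> real" where
  "gauss t x y = (4 * pi * t) powr (-1/2) * exp (- ((y - x)^2) / (4 * t))"

definition kato_int :: "(real \<Rightarrow> real) \<Rightarrow> real \<Rightarrow> real \<Rightarrow> ennreal" where
  "kato_int V t x =
     (\<integral>\<^sup>+ s. (\<integral>\<^sup>+ z. ennreal (gauss s x z * \<bar>V z\<bar>) \<partial>lborel) * indicator {0<..<t} s \<partial>lborel)"

definition kato_class :: "(real \<Rightarrow> real) \<Rightarrow> bool" where
  "kato_class V \<longleftrightarrow> ((\<lambda>t. SUP x. kato_int V t x) \<longlongrightarrow> 0) (at_right 0)"

definition kato_hat_class :: "(real \<Rightarrow> real) \<Rightarrow> bool" where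
  "kato_hat_class V \<longleftrightarrow> (\<exists>t>0. (SUP x. kato_int V t x) < \<infinity>)"

definition S_fun :: "(real \<Rightarrow> real) \<Rightarrow> real \<Rightarrow> real \<Rightarrow> real \<Rightarrow> ennreal" where
  "S_fun V t x y =
     (\<integral>\<^sup>+ s. (\<integral>\<^sup>+ z. ennreal (gauss s x z * gauss (t - s) z y / gauss t x y * \<bar>V z\<bar>) \<partial>lborel)
        * indicator {0<..<t} s \<partial>lborel)"

definition S_norm :: "(real \<Rightarrow> real) \<Rightarrow> real \<Rightarrow> ennreal" where
  "S_norm V T = (SUP t\<in>{0<..T}. SUP x. SUP y. S_fun V t x y)"

end

theory Submission imports Defs "HOL-Probability.Distributions" begin

lemma powr_neg_half: "0 < (x::real) \<Longrightarrow> x powr (-1/2) = 1 / sqrt x"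
proof -
  assume x: "0 < x"
  have "(-1/2::real) = -(1/2)" by simp
  then have "x powr (-1/2) = inverse (x powr (1/2))" by (simp only: powr_minus)
  also have "\<dots> = 1 / sqrt x" using x by (simp add: powr_half_sqrt inverse_eq_divide)
  finally show ?thesis .
qed

lemma powr_neg_half': "0 < (x::real) \<Longrightarrow> x powr (-(1/2)) = 1 / sqrt x"
  using powr_neg_half by simp

lemma gauss_alt: "0 < t \<Longrightarrow> gauss t x y = exp (- ((y - x)^2) / (4 * t)) / sqrt (4 * pi * t)"
  unfolding gauss_def by (simp add: powr_neg_half')

lemma gauss_pos: "0 < t \<Longrightarrow> 0 < gauss t x y"
  by (simp add: gauss_alt)

lemma kernel_id:
  assumes "0 < s" "s < t"
  shows "gauss s x z * gauss (t - s) z y / gauss t x y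
       = gauss (s*(t-s)/t) (x + s/t*(y-x)) z"
proof -
  have t: "0 < t" "0 < t - s" "0 < s*(t-s)/t" using assms by auto
  have e: "- ((z - x)^2) / (4 * s) + - ((y - z)^2) / (4 * (t-s)) - (- ((y - x)^2) / (4 * t))
        = - ((z - (x + s/t*(y-x)))^2) / (4 * (s*(t-s)/t))"
    using t assms by (simp add: field_simps power2_eq_square)
  have q: "sqrt (4 * pi * t) / (sqrt (4 * pi * s) * sqrt (4 * pi * (t - s))) = 1 / sqrt (4 * pi * (s * (t - s) / t))"
  proof -
    have "4 * pi * (s * (t - s) / t) = (4 * pi * s) * (4 * pi * (t - s)) / (4 * pi * t)" using t by (simp add: field_simps)
    then have "sqrt (4 * pi * (s * (t - s) / t)) = sqrt (4 * pi * s) * sqrt (4 * pi * (t - s)) / sqrt (4 * pi * t)"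
      by (simp only: real_sqrt_mult real_sqrt_divide)
    then show ?thesis by simp
  qed
  have "gauss s x z * gauss (t - s) z y / gauss t x y
      = exp (- ((z - x)^2) / (4 * s) + - ((y - z)^2) / (4 * (t-s)) - (- ((y - x)^2) / (4 * t)))
        * (sqrt (4 * pi * t) / (sqrt (4 * pi * s) * sqrt (4 * pi * (t - s))))"
  proof -
    have "gauss s x z * gauss (t - s) z y / gauss t x y
      = (exp (- ((z - x)^2) / (4 * s)) * exp (- ((y - z)^2) / (4 * (t-s))) / exp (- ((y - x)^2) / (4 * t)))
        * (sqrt (4 * pi * t) / (sqrt (4 * pi * s) * sqrt (4 * pi * (t - s))))"
      using t assms by (simp add: gauss_alt)
    then show ?thesis by (simp only: exp_add exp_diff)
  qed
  also have "\<dots> = gauss (s*(t-s)/t) (x + s/t*(y-x)) z"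
    unfolding e q using t by (simp add: gauss_alt)
  finally show ?thesis .
qed

definition Mloc :: "(real \<Rightarrow> real) \<Rightarrow> ennreal" where
  "Mloc V = (SUP x. \<integral>\<^sup>+ z. ennreal \<bar>V z\<bar> * indicator {x - 1..x + 1} z \<partial>lborel)"

lemma gauss_int:
  assumes a: "0 < a"
  shows "(\<integral>\<^sup>+ w. ennreal (exp (- ((w - m)^2) / (8 * a))) \<partial>lborel) = ennreal (sqrt (8 * pi * a))"
proof -
  have eq: "exp (- ((w - m)^2) / (8 * a)) = sqrt (8 * pi * a) * normal_density m (2 * sqrt a) w" for w
  proof -
    have "(2 * sqrt a)^2 = 4 * a" using a by (simp add: power_mult_distrib)
    then show ?thesis using a
      by (simp add: normal_density_def real_sqrt_mult)
  qed
  have "(\<integral>\<^sup>+ w. ennreal (exp (- ((w - m)^2) / (8 * a))) \<partial>lborel)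
      = (\<integral>\<^sup>+ w. ennreal (sqrt (8 * pi * a)) * ennreal (normal_density m (2 * sqrt a) w) \<partial>lborel)"
    by (rule nn_integral_cong, subst eq, rule ennreal_mult) (use a in auto)
  also have "\<dots> = ennreal (sqrt (8 * pi * a)) * (\<integral>\<^sup>+ w. ennreal (normal_density m (2 * sqrt a) w) \<partial>lborel)"
    by (rule nn_integral_cmult) simp
  also have "(\<integral>\<^sup>+ w. ennreal (normal_density m (2 * sqrt a) w) \<partial>lborel) = 1"
    using nn_integral_eq_integral[OF integrable_normal_density[of "2 * sqrt a" m]]
      integral_normal_density[of "2 * sqrt a" m] a by simp
  finally show ?thesis by simp
qed

lemma avg_bound:
  assumes V[measurable]: "V \<in> borel_measurable borel" and a: "1 \<le> a"
  shows "(\<integral>\<^sup>+ z. ennreal (exp (- ((z - m)^2) / (4 * a)) * \<bar>V z\<bar>) \<partial>lborel)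
         \<le> ennreal (exp (1/4) * sqrt (2 * pi * a)) * Mloc V"
proof -

  define c where "c = exp (1/4) / (2::real)"
  define K where "K w = exp (- ((w - m)^2) / (8 * a))" for w
  define F where "F z w = ennreal (c * K w * \<bar>V z\<bar> * (if \<bar>w - z\<bar> \<le> 1 then 1 else 0))" for z w
  have c0: "0 \<le> c" by (simp add: c_def)
  have Kpos: "0 \<le> K w" for w by (simp add: K_def)
  have key: "exp (- ((z - m)^2) / (4 * a)) \<le> 2 * c * K w" if wz: "\<bar>w - z\<bar> \<le> 1" for z w
  proof -
    have s1: "(w - m)^2 \<le> 2 * (z - m)^2 + 2 * (w - z)^2"
      using zero_le_power2[of "(w - z) - (z - m)"] by (simp add: power2_eq_square algebra_simps)
    have s2: "(w - z)^2 \<le> 1" using wz by (simp add: abs_square_le_1)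
    have s3: "(w - m)^2 \<le> 2 * (z - m)^2 + 2 * a" using s1 s2 a by linarith
    have "- ((z - m)^2) / (4 * a) \<le> 1/4 + - ((w - m)^2) / (8 * a)"
      using s3 a by (simp add: field_simps)
    then have "exp (- ((z - m)^2) / (4 * a)) \<le> exp (1/4 + - ((w - m)^2) / (8 * a))"
      by simp
    then have "exp (- ((z - m)^2) / (4 * a)) \<le> exp (1/4) * exp (- ((w - m)^2) / (8 * a))"
      by (simp only: exp_add)
    moreover have "2 * c * K w = exp (1/4) * exp (- ((w - m)^2) / (8 * a))"
      by (simp add: c_def K_def)
    ultimately show ?thesis by simp
  qed
  have pt: "ennreal (exp (- ((z - m)^2) / (4 * a)) * \<bar>V z\<bar>) \<le> (\<integral>\<^sup>+ w. F z w \<partial>lborel)" for z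
  proof -
    let ?e = "exp (- ((z - m)^2) / (4 * a)) * \<bar>V z\<bar>"
    have "(\<integral>\<^sup>+ w. ennreal (?e / 2) * indicator {z-1..z+1} w \<partial>lborel) \<le> (\<integral>\<^sup>+ w. F z w \<partial>lborel)"
    proof (rule nn_integral_mono)
      fix w
      show "ennreal (?e / 2) * indicator {z-1..z+1} w \<le> F z w"
      proof (cases "\<bar>w - z\<bar> \<le> 1")
        case True
        then have "w \<in> {z-1..z+1}" by auto
        moreover have "?e / 2 \<le> c * K w * \<bar>V z\<bar>"
          using mult_right_mono[OF key[OF True], of "\<bar>V z\<bar>"] by (simp add: algebra_simps)
        ultimately show ?thesis using True by (simp add: F_def ennreal_leI)
      next
        case False
        then have "w \<notin> {z-1..z+1}" by auto
        then show ?thesis by simp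
      qed
    qed
    moreover have "(\<integral>\<^sup>+ w. ennreal (?e / 2) * indicator {z-1..z+1} w \<partial>lborel) = ennreal ?e"
    proof -
      have "(\<integral>\<^sup>+ w. ennreal (?e / 2) * indicator {z-1..z+1} w \<partial>lborel) = ennreal (?e / 2) * ennreal 2"
        by (simp add: nn_integral_cmult_indicator)
      also have "\<dots> = ennreal (?e / 2 * 2)" by (rule ennreal_mult[symmetric]) auto
      also have "\<dots> = ennreal ?e" by simp
      finally show ?thesis .
    qed
    ultimately show ?thesis by simp
  qed
  have "(\<integral>\<^sup>+ z. ennreal (exp (- ((z - m)^2) / (4 * a)) * \<bar>V z\<bar>) \<partial>lborel)
      \<le> (\<integral>\<^sup>+ z. (\<integral>\<^sup>+ w. F z w \<partial>lborel) \<partial>lborel)"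
    by (rule nn_integral_mono) (rule pt)
  also have "\<dots> = (\<integral>\<^sup>+ w. (\<integral>\<^sup>+ z. F z w \<partial>lborel) \<partial>lborel)"
    by (rule lborel_pair.Fubini'[symmetric]) (unfold F_def K_def, measurable)
  also have "\<dots> \<le> (\<integral>\<^sup>+ w. ennreal (c * K w) * Mloc V \<partial>lborel)"
  proof (rule nn_integral_mono)
    fix w
    have "(\<integral>\<^sup>+ z. F z w \<partial>lborel)
        = (\<integral>\<^sup>+ z. ennreal (c * K w) * (ennreal \<bar>V z\<bar> * indicator {w - 1..w + 1} z) \<partial>lborel)"
    proof (rule nn_integral_cong)
      fix z
      show "F z w = ennreal (c * K w) * (ennreal \<bar>V z\<bar> * indicator {w - 1..w + 1} z)"
        using c0 Kpos[of w] by (auto simp: F_def indicator_def ennreal_mult abs_le_iff)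
    qed
    also have "\<dots> = ennreal (c * K w) * (\<integral>\<^sup>+ z. ennreal \<bar>V z\<bar> * indicator {w - 1..w + 1} z \<partial>lborel)"
      by (rule nn_integral_cmult) measurable
    also have "\<dots> \<le> ennreal (c * K w) * Mloc V"
      unfolding Mloc_def by (intro mult_left_mono SUP_upper) auto
    finally show "(\<integral>\<^sup>+ z. F z w \<partial>lborel) \<le> ennreal (c * K w) * Mloc V" .
  qed
  also have "\<dots> = (\<integral>\<^sup>+ w. ennreal c * ennreal (K w) \<partial>lborel) * Mloc V"
    by (subst nn_integral_multc) (auto simp: K_def ennreal_mult c0)
  also have "\<dots> = ennreal c * ennreal (sqrt (8 * pi * a)) * Mloc V"
    using a gauss_int[of a m] by (subst nn_integral_cmult) (auto simp: K_def)
  also have "ennreal c * ennreal (sqrt (8 * pi * a)) = ennreal (exp (1/4) * sqrt (2 * pi * a))"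
  proof -
    have "sqrt (8 * pi * a) = 2 * sqrt (2 * pi * a)"
      using real_sqrt_mult[of 4 "2 * pi * a"] by (simp add: mult.assoc)
    then have "c * sqrt (8 * pi * a) = exp (1/4) * sqrt (2 * pi * a)" by (simp add: c_def)
    moreover have "ennreal c * ennreal (sqrt (8 * pi * a)) = ennreal (c * sqrt (8 * pi * a))"
      using c0 a by (intro ennreal_mult[symmetric]) auto
    ultimately show ?thesis by simp
  qed
  finally show ?thesis .
qed

lemma J_bound:
  assumes V[measurable]: "V \<in> borel_measurable borel" and sg: "0 < \<sigma>"
  shows "(\<integral>\<^sup>+ z. ennreal (gauss \<sigma> m z * \<bar>V z\<bar>) \<partial>lborel)
         \<le> ennreal (exp (1/4) * (1 + 1 / sqrt (2 * \<sigma>))) * Mloc V"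
proof -
  define a where "a = max \<sigma> 1"
  have a1: "1 \<le> a" and sa: "\<sigma> \<le> a" by (auto simp: a_def)
  have pt: "gauss \<sigma> m z * \<bar>V z\<bar> \<le> (1 / sqrt (4 * pi * \<sigma>)) * (exp (- ((z - m)^2) / (4 * a)) * \<bar>V z\<bar>)" for z
  proof -
    have "(z - m)^2 / (4 * a) \<le> (z - m)^2 / (4 * \<sigma>)"
      using sg sa by (intro divide_left_mono) auto
    then have "exp (- ((z - m)^2) / (4 * \<sigma>)) \<le> exp (- ((z - m)^2) / (4 * a))" by simp
    then show ?thesis using sg
      by (simp add: gauss_alt divide_right_mono mult_right_mono)
  qed
  have "(\<integral>\<^sup>+ z. ennreal (gauss \<sigma> m z * \<bar>V z\<bar>) \<partial>lborel)
      \<le> (\<integral>\<^sup>+ z. ennreal (1 / sqrt (4 * pi * \<sigma>)) * ennreal (exp (- ((z - m)^2) / (4 * a)) * \<bar>V z\<bar>) \<partial>lborel)"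
  proof (rule nn_integral_mono)
    fix z
    have "ennreal (gauss \<sigma> m z * \<bar>V z\<bar>) \<le> ennreal ((1 / sqrt (4 * pi * \<sigma>)) * (exp (- ((z - m)^2) / (4 * a)) * \<bar>V z\<bar>))"
      by (rule ennreal_leI[OF pt])
    also have "\<dots> = ennreal (1 / sqrt (4 * pi * \<sigma>)) * ennreal (exp (- ((z - m)^2) / (4 * a)) * \<bar>V z\<bar>)"
      using sg by (intro ennreal_mult) auto
    finally show "ennreal (gauss \<sigma> m z * \<bar>V z\<bar>) \<le> \<dots>" .
  qed
  also have "\<dots> = ennreal (1 / sqrt (4 * pi * \<sigma>)) * (\<integral>\<^sup>+ z. ennreal (exp (- ((z - m)^2) / (4 * a)) * \<bar>V z\<bar>) \<partial>lborel)"
    by (rule nn_integral_cmult) measurable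
  also have "\<dots> \<le> ennreal (1 / sqrt (4 * pi * \<sigma>)) * (ennreal (exp (1/4) * sqrt (2 * pi * a)) * Mloc V)"
    by (intro mult_left_mono avg_bound[OF V a1]) auto
  also have "\<dots> = ennreal (1 / sqrt (4 * pi * \<sigma>) * (exp (1/4) * sqrt (2 * pi * a))) * Mloc V"
    using sg a1 by (subst ennreal_mult) (auto simp: mult.assoc)
  also have "\<dots> \<le> ennreal (exp (1/4) * (1 + 1 / sqrt (2 * \<sigma>))) * Mloc V"
  proof (intro mult_right_mono ennreal_leI)
    have q: "1 / sqrt (4 * pi * \<sigma>) * sqrt (2 * pi * a) = sqrt (a / (2 * \<sigma>))"
    proof -
      have "a / (2 * \<sigma>) = (2 * pi * a) / (4 * pi * \<sigma>)" using sg by (simp add: field_simps)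
      then have "sqrt (a / (2 * \<sigma>)) = sqrt (2 * pi * a) / sqrt (4 * pi * \<sigma>)"
        by (simp only: real_sqrt_divide)
      then show ?thesis by simp
    qed
    have "sqrt (a / (2 * \<sigma>)) \<le> 1 + 1 / sqrt (2 * \<sigma>)"
    proof (cases "1 \<le> \<sigma>")
      case True
      then have "a = \<sigma>" by (simp add: a_def)
      then have "sqrt (a / (2 * \<sigma>)) = sqrt (1/2)" using sg by simp
      also have "\<dots> \<le> 1" by simp
      finally have "sqrt (a / (2 * \<sigma>)) \<le> 1" .
      moreover have "0 \<le> 1 / sqrt (2 * \<sigma>)" using sg by simp
      ultimately show ?thesis by linarith
    next
      case False
      then have "a = 1" by (simp add: a_def)
      then show ?thesis by (simp add: real_sqrt_divide)
    qed
    then show "1 / sqrt (4 * pi * \<sigma>) * (exp (1/4) * sqrt (2 * pi * a)) \<le> exp (1/4) * (1 + 1 / sqrt (2 * \<sigma>))"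
      using q by (simp add: mult.left_commute[of _ "exp (1/4)"])
  qed auto
  finally show ?thesis .
qed

lemma int_powr_half: "0 \<le> (t::real) \<Longrightarrow> ((\<lambda>s. s powr (-(1/2))) has_integral 2 * sqrt t) {0..t}"
  using has_integral_powr_from_0[of "-(1/2)" t] by (simp add: powr_half_sqrt mult.commute)

lemma int_powr_half_refl: "0 \<le> (t::real) \<Longrightarrow> ((\<lambda>s. (t - s) powr (-(1/2))) has_integral 2 * sqrt t) {0..t}"
proof -
  assume t: "0 \<le> t"
  have "((\<lambda>x. (\<lambda>u. u powr (-(1/2))) (-x)) has_integral 2 * sqrt t) {-t..-0}"
    using int_powr_half[OF t] by (subst has_integral_reflect_real)
  then have "((\<lambda>x. (-x) powr (-(1/2))) has_integral 2 * sqrt t) {-t..0}" by simp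
  from has_integral_shift_real_ivl[OF this, of "-t"]
  show ?thesis by simp
qed

definition hfun :: "real \<Rightarrow> real \<Rightarrow> real" where
  "hfun t s = 1 + s powr (-(1/2)) + (t - s) powr (-(1/2))"

lemma hfun_nonneg: "0 \<le> hfun t s" by (simp add: hfun_def add_nonneg_nonneg)

lemma int_h:
  assumes t: "0 < t"
  shows "(\<integral>\<^sup>+ s. ennreal (indicator {0..t} s * hfun t s) \<partial>lborel) = ennreal (t + 4 * sqrt t)"
proof -
  have c: "((\<lambda>s. 1) has_integral t) {0..t}"
    using has_integral_const_real[of "1::real" 0 t] t by simp
  have H: "(hfun t has_integral (t + 2 * sqrt t + 2 * sqrt t)) {0..t}"
    unfolding hfun_def using t
    by (intro has_integral_add c int_powr_half int_powr_half_refl) auto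
  have "(\<integral>\<^sup>+ s. ennreal (indicator {0..t} s * hfun t s) \<partial>lborel) = ennreal (t + 2 * sqrt t + 2 * sqrt t)"
    by (rule nn_integral_has_integral_lebesgue[OF hfun_nonneg H])
  then show ?thesis by (simp add: add.commute)
qed

lemma time_bound:
  assumes t: "0 < t"
    and B: "\<And>s. 0 < s \<Longrightarrow> s < t \<Longrightarrow> F s \<le> ennreal (exp (1/4) * (1 + 1 / sqrt (2 * \<sigma> s))) * M"
    and S: "\<And>s. 0 < s \<Longrightarrow> s < t \<Longrightarrow> 0 < \<sigma> s \<and> 1 / sqrt (2 * \<sigma> s) \<le> s powr (-(1/2)) + (t - s) powr (-(1/2))"
  shows "(\<integral>\<^sup>+ s. F s * indicator {0<..<t} s \<partial>lborel) \<le> ennreal (exp (1/4) * (t + 4 * sqrt t)) * M"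
proof -
  have hm[measurable]: "hfun t \<in> borel_measurable borel" unfolding hfun_def by measurable
  have hm2: "(\<lambda>s. ennreal (indicator {0..t} s * hfun t s)) \<in> borel_measurable lborel" by measurable
  have hm3: "(\<lambda>s. ennreal (exp (1/4)) * ennreal (indicator {0..t} s * hfun t s)) \<in> borel_measurable lborel"
    using hm2 by measurable
  have eq1: "(\<integral>\<^sup>+ s. ennreal (exp (1/4)) * ennreal (indicator {0..t} s * hfun t s) * M \<partial>lborel)
     = (\<integral>\<^sup>+ s. ennreal (exp (1/4)) * ennreal (indicator {0..t} s * hfun t s) \<partial>lborel) * M"
    by (rule nn_integral_multc[OF hm3])
  have eq2: "(\<integral>\<^sup>+ s. ennreal (exp (1/4)) * ennreal (indicator {0..t} s * hfun t s) \<partial>lborel)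
     = ennreal (exp (1/4)) * ennreal (t + 4 * sqrt t)"
    by (subst nn_integral_cmult[OF hm2]) (simp add: int_h t)
  have "(\<integral>\<^sup>+ s. F s * indicator {0<..<t} s \<partial>lborel)
      \<le> (\<integral>\<^sup>+ s. ennreal (exp (1/4)) * ennreal (indicator {0..t} s * hfun t s) * M \<partial>lborel)"
  proof (rule nn_integral_mono)
    fix s
    show "F s * indicator {0<..<t} s \<le> ennreal (exp (1/4)) * ennreal (indicator {0..t} s * hfun t s) * M"
    proof (cases "0 < s \<and> s < t")
      case True
      then have st: "0 < s" "s < t" by auto
      have "1 + 1 / sqrt (2 * \<sigma> s) \<le> hfun t s"
        using S[OF st] by (simp add: hfun_def)
      then have le: "exp (1/4) * (1 + 1 / sqrt (2 * \<sigma> s)) \<le> exp (1/4) * (indicator {0..t} s * hfun t s)"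
        using st by (simp add: indicator_def)
      have "F s * indicator {0<..<t} s = F s" using st by simp
      also have "\<dots> \<le> ennreal (exp (1/4) * (1 + 1 / sqrt (2 * \<sigma> s))) * M" by (rule B[OF st])
      also have "\<dots> \<le> ennreal (exp (1/4) * (indicator {0..t} s * hfun t s)) * M"
        by (intro mult_right_mono ennreal_leI le) auto
      also have "\<dots> = ennreal (exp (1/4)) * ennreal (indicator {0..t} s * hfun t s) * M"
        by (subst ennreal_mult) (auto simp: hfun_nonneg)
      finally show ?thesis .
    next
      case False
      then show ?thesis by simp
    qed
  qed
  also have "\<dots> = ennreal (exp (1/4)) * ennreal (t + 4 * sqrt t) * M"
    unfolding eq1 eq2 ..
  also have "\<dots> = ennreal (exp (1/4) * (t + 4 * sqrt t)) * M"
    using t by (subst ennreal_mult) auto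
  finally show ?thesis .
qed

lemma inv_sqrt_mono: "0 < (a::real) \<Longrightarrow> a \<le> b \<Longrightarrow> 1 / sqrt b \<le> 1 / sqrt a"
  by (intro divide_left_mono mult_pos_pos) auto

lemma kato_upper:
  assumes V[measurable]: "V \<in> borel_measurable borel" and t: "0 < t"
  shows "kato_int V t x \<le> ennreal (exp (1/4) * (t + 4 * sqrt t)) * Mloc V"
  unfolding kato_int_def
proof (rule time_bound[OF t, where \<sigma> = "\<lambda>s. s"])
  fix s assume s: "0 < s" "s < t"
  show "(\<integral>\<^sup>+ z. ennreal (gauss s x z * \<bar>V z\<bar>) \<partial>lborel) \<le> ennreal (exp (1/4) * (1 + 1 / sqrt (2 * s))) * Mloc V"
    by (rule J_bound[OF V s(1)])
  have "1 / sqrt (2 * s) \<le> 1 / sqrt s" using s by (intro inv_sqrt_mono) auto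
  also have "\<dots> = s powr (-(1/2))" using powr_neg_half'[OF s(1)] by simp
  also have "\<dots> \<le> s powr (-(1/2)) + (t - s) powr (-(1/2))" by simp
  finally show "0 < s \<and> 1 / sqrt (2 * s) \<le> s powr (-(1/2)) + (t - s) powr (-(1/2))" using s by simp
qed

lemma sigma_bound:
  assumes s: "0 < s" "s < (t::real)"
  shows "1 / sqrt (2 * (s * (t - s) / t)) \<le> s powr (-(1/2)) + (t - s) powr (-(1/2))"
proof (cases "s \<le> t - s")
  case True
  have "s \<le> 2 * (s * (t - s) / t)" using s True by (simp add: field_simps)
  then have "1 / sqrt (2 * (s * (t - s) / t)) \<le> 1 / sqrt s" using s by (intro inv_sqrt_mono) auto
  also have "\<dots> = s powr (-(1/2))" using powr_neg_half'[OF s(1)] by simp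
  also have "\<dots> \<le> s powr (-(1/2)) + (t - s) powr (-(1/2))" by simp
  finally show ?thesis .
next
  case False
  have ts: "0 < t - s" using s by simp
  have p: "(t - s) * (t - 2 * s) \<le> 0" using s False by (intro mult_nonneg_nonpos) auto
  have p': "t * t + s * (s * 2) \<le> s * (t * 3)" using p by (simp add: algebra_simps)
  have "t - s \<le> 2 * (s * (t - s) / t)" using s p' by (simp add: field_simps)
  then have "1 / sqrt (2 * (s * (t - s) / t)) \<le> 1 / sqrt (t - s)" using ts by (intro inv_sqrt_mono) auto
  also have "\<dots> = (t - s) powr (-(1/2))" using powr_neg_half'[OF ts] by simp
  also have "\<dots> \<le> s powr (-(1/2)) + (t - s) powr (-(1/2))" by simp
  finally show ?thesis .
qed

lemma S_upper:
  assumes V[measurable]: "V \<in> borel_measurable borel" and t: "0 < t"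
  shows "S_fun V t x y \<le> ennreal (exp (1/4) * (t + 4 * sqrt t)) * Mloc V"
  unfolding S_fun_def
proof (rule time_bound[OF t, where \<sigma> = "\<lambda>s. s * (t - s) / t"])
  fix s assume s: "0 < s" "s < t"
  have sg: "0 < s * (t - s) / t" using s by simp
  have "(\<integral>\<^sup>+ z. ennreal (gauss s x z * gauss (t - s) z y / gauss t x y * \<bar>V z\<bar>) \<partial>lborel)
      = (\<integral>\<^sup>+ z. ennreal (gauss (s * (t - s) / t) (x + s / t * (y - x)) z * \<bar>V z\<bar>) \<partial>lborel)"
    using kernel_id[OF s] by simp
  also have "\<dots> \<le> ennreal (exp (1/4) * (1 + 1 / sqrt (2 * (s * (t - s) / t)))) * Mloc V"
    by (rule J_bound[OF V sg])
  finally show "(\<integral>\<^sup>+ z. ennreal (gauss s x z * gauss (t - s) z y / gauss t x y * \<bar>V z\<bar>) \<partial>lborel)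
      \<le> ennreal (exp (1/4) * (1 + 1 / sqrt (2 * (s * (t - s) / t)))) * Mloc V" .
  show "0 < s * (t - s) / t \<and> 1 / sqrt (2 * (s * (t - s) / t)) \<le> s powr (-(1/2)) + (t - s) powr (-(1/2))"
    using sg sigma_bound[OF s] by simp
qed

definition Iloc :: "(real \<Rightarrow> real) \<Rightarrow> real \<Rightarrow> ennreal" where
  "Iloc V x = (\<integral>\<^sup>+ z. ennreal \<bar>V z\<bar> * indicator {x - 1..x + 1} z \<partial>lborel)"

lemma gauss_lower:
  assumes "0 < c" "c \<le> \<sigma>" "\<sigma> \<le> b" "\<bar>z - m\<bar> \<le> 1"
  shows "exp (- 1 / (4 * c)) / sqrt (4 * pi * b) \<le> gauss \<sigma> m z"
proof -
  have sg: "0 < \<sigma>" using assms by simp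
  have "(z - m)^2 \<le> 1" using assms(4) by (simp add: abs_square_le_1)
  then have "(z - m)^2 / (4 * \<sigma>) \<le> 1 / (4 * \<sigma>)" using sg by (intro divide_right_mono) auto
  also have "\<dots> \<le> 1 / (4 * c)" using assms by (intro divide_left_mono) auto
  finally have "exp (- 1 / (4 * c)) \<le> exp (- ((z - m)^2) / (4 * \<sigma>))" by simp
  moreover have "sqrt (4 * pi * \<sigma>) \<le> sqrt (4 * pi * b)" using assms by simp
  ultimately show ?thesis using sg
    unfolding gauss_alt[OF sg] by (intro frac_le) auto
qed

lemma inner_lower:
  assumes V[measurable]: "V \<in> borel_measurable borel" and "0 < c" "c \<le> \<sigma>" "\<sigma> \<le> b"
  shows "ennreal (exp (- 1 / (4 * c)) / sqrt (4 * pi * b)) * Iloc V m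
         \<le> (\<integral>\<^sup>+ z. ennreal (gauss \<sigma> m z * \<bar>V z\<bar>) \<partial>lborel)"
proof -
  let ?c = "exp (- 1 / (4 * c)) / sqrt (4 * pi * b)"
  have "ennreal ?c * Iloc V m = (\<integral>\<^sup>+ z. ennreal ?c * (ennreal \<bar>V z\<bar> * indicator {m - 1..m + 1} z) \<partial>lborel)"
    unfolding Iloc_def by (rule nn_integral_cmult[symmetric]) measurable
  also have "\<dots> \<le> (\<integral>\<^sup>+ z. ennreal (gauss \<sigma> m z * \<bar>V z\<bar>) \<partial>lborel)"
  proof (rule nn_integral_mono)
    fix z
    show "ennreal ?c * (ennreal \<bar>V z\<bar> * indicator {m - 1..m + 1} z) \<le> ennreal (gauss \<sigma> m z * \<bar>V z\<bar>)"
    proof (cases "z \<in> {m - 1..m + 1}")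
      case True
      then have "\<bar>z - m\<bar> \<le> 1" by auto
      then have g: "?c \<le> gauss \<sigma> m z" using gauss_lower assms by blast
      have "ennreal ?c * (ennreal \<bar>V z\<bar> * indicator {m - 1..m + 1} z) = ennreal (?c * \<bar>V z\<bar>)"
      proof -
        have i: "indicator {m - 1..m + 1} z = (1::ennreal)" using True by simp
        have "ennreal ?c * ennreal \<bar>V z\<bar> = ennreal (?c * \<bar>V z\<bar>)"
          using assms by (intro ennreal_mult[symmetric]) auto
        then show ?thesis by (simp only: i mult_1_right)
      qed
      also have "\<dots> \<le> ennreal (gauss \<sigma> m z * \<bar>V z\<bar>)"
        by (intro ennreal_leI mult_right_mono g) auto
      finally show ?thesis .
    next
      case False
      then show ?thesis by simp
    qed
  qed
  finally show ?thesis .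
qed

lemma kato_lower:
  assumes V[measurable]: "V \<in> borel_measurable borel" and t: "0 < t"
  shows "\<exists>C>0. \<forall>x. ennreal C * Iloc V x \<le> kato_int V t x"
proof -
  define c0 where "c0 = exp (- 1 / (4 * (t/2))) / sqrt (4 * pi * t)"
  have c0: "0 < c0" using t by (simp add: c0_def)
  have "ennreal (c0 * (t/2)) * Iloc V x \<le> kato_int V t x" for x
  proof -
    have "(\<integral>\<^sup>+ s. (ennreal c0 * Iloc V x) * indicator {t/2<..<t} s \<partial>lborel) = (ennreal c0 * Iloc V x) * emeasure lborel {t/2<..<t}"
      by (rule nn_integral_cmult_indicator) simp
    also have "emeasure lborel {t/2<..<t} = ennreal (t/2)" using t by (simp add: field_simps)
    also have "ennreal c0 * Iloc V x * ennreal (t/2) = ennreal (c0 * (t/2)) * Iloc V x"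
    proof -
      have "ennreal (c0 * (t/2)) = ennreal c0 * ennreal (t/2)" using c0 t by (intro ennreal_mult) auto
      then show ?thesis by (simp only: mult_ac)
    qed
    finally have "ennreal (c0 * (t/2)) * Iloc V x = (\<integral>\<^sup>+ s. (ennreal c0 * Iloc V x) * indicator {t/2<..<t} s \<partial>lborel)" ..
    also have "\<dots> \<le> kato_int V t x"
      unfolding kato_int_def
    proof (rule nn_integral_mono)
      fix s
      show "ennreal c0 * Iloc V x * indicator {t/2<..<t} s
            \<le> (\<integral>\<^sup>+ z. ennreal (gauss s x z * \<bar>V z\<bar>) \<partial>lborel) * indicator {0<..<t} s"
      proof (cases "s \<in> {t/2<..<t}")
        case True
        then have "ennreal c0 * Iloc V x \<le> (\<integral>\<^sup>+ z. ennreal (gauss s x z * \<bar>V z\<bar>) \<partial>lborel)"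
          unfolding c0_def using t by (intro inner_lower[OF V]) auto
        moreover have "s \<in> {0<..<t}" using True t by auto
        ultimately show ?thesis using True by simp
      next
        case False
        then show ?thesis by simp
      qed
    qed
    finally show ?thesis .
  qed
  moreover have "0 < c0 * (t/2)" using c0 t by simp
  ultimately show ?thesis by blast
qed

lemma S_lower:
  assumes V[measurable]: "V \<in> borel_measurable borel" and t: "0 < t"
  shows "\<exists>C>0. \<forall>x. ennreal C * Iloc V x \<le> S_fun V t x x"
proof -
  define c0 where "c0 = exp (- 1 / (4 * (t/16))) / sqrt (4 * pi * (t/4))"
  have c0: "0 < c0" using t by (simp add: c0_def)
  have "ennreal (c0 * (t/2)) * Iloc V x \<le> S_fun V t x x" for x
  proof -
    have "(\<integral>\<^sup>+ s. (ennreal c0 * Iloc V x) * indicator {t/4<..<3*t/4} s \<partial>lborel) = (ennreal c0 * Iloc V x) * emeasure lborel {t/4<..<3*t/4}"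
      by (rule nn_integral_cmult_indicator) simp
    also have "emeasure lborel {t/4<..<3*t/4} = ennreal (t/2)" using t by (simp add: field_simps)
    also have "ennreal c0 * Iloc V x * ennreal (t/2) = ennreal (c0 * (t/2)) * Iloc V x"
    proof -
      have "ennreal (c0 * (t/2)) = ennreal c0 * ennreal (t/2)" using c0 t by (intro ennreal_mult) auto
      then show ?thesis by (simp only: mult_ac)
    qed
    finally have "ennreal (c0 * (t/2)) * Iloc V x = (\<integral>\<^sup>+ s. (ennreal c0 * Iloc V x) * indicator {t/4<..<3*t/4} s \<partial>lborel)" ..
    also have "\<dots> \<le> S_fun V t x x"
      unfolding S_fun_def
    proof (rule nn_integral_mono)
      fix s
      show "ennreal c0 * Iloc V x * indicator {t/4<..<3*t/4} s
            \<le> (\<integral>\<^sup>+ z. ennreal (gauss s x z * gauss (t - s) z x / gauss t x x * \<bar>V z\<bar>) \<partial>lborel) * indicator {0<..<t} s"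
      proof (cases "s \<in> {t/4<..<3*t/4}")
        case True
        then have s: "0 < s" "s < t" using t by auto
        have lo: "t/16 \<le> s * (t - s) / t"
        proof -
          have "t/4 * (t/4) \<le> s * (t - s)" using True t by (intro mult_mono) auto
          then show ?thesis using t by (simp add: field_simps)
        qed
        have hi: "s * (t - s) / t \<le> t/4"
        proof -
          have "0 \<le> (s - t/2)^2" by simp
          then have "s * (t - s) \<le> t * t / 4" by (simp add: power2_eq_square algebra_simps)
          then show ?thesis using t by (simp add: field_simps)
        qed
        have "(\<integral>\<^sup>+ z. ennreal (gauss s x z * gauss (t - s) z x / gauss t x x * \<bar>V z\<bar>) \<partial>lborel)
            = (\<integral>\<^sup>+ z. ennreal (gauss (s * (t - s) / t) x z * \<bar>V z\<bar>) \<partial>lborel)"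
          using kernel_id[OF s, of x _ x] by simp
        moreover have "ennreal c0 * Iloc V x \<le> (\<integral>\<^sup>+ z. ennreal (gauss (s * (t - s) / t) x z * \<bar>V z\<bar>) \<partial>lborel)"
          unfolding c0_def using t lo hi by (intro inner_lower[OF V]) auto
        moreover have "s \<in> {0<..<t}" using s by auto
        ultimately show ?thesis using True by simp
      next
        case False
        then show ?thesis by simp
      qed
    qed
    finally show ?thesis .
  qed
  moreover have "0 < c0 * (t/2)" using c0 t by simp
  ultimately show ?thesis by blast
qed

lemma bound_tendsto:
  fixes f :: "real \<Rightarrow> ennreal"
  assumes ev: "\<forall>\<^sub>F t in at_right 0. f t \<le> ennreal (exp (1/4) * (t + 4 * sqrt t)) * M" and M: "M < \<infinity>"
  shows "(f \<longlongrightarrow> 0) (at_right 0)"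
proof -
  obtain m where m: "M = ennreal m" "0 \<le> m" using M by (cases M) auto
  have lim: "((\<lambda>t. exp (1/4) * (t + 4 * sqrt t) * m) \<longlongrightarrow> exp (1/4) * (0 + 4 * sqrt 0) * m) (at_right 0)"
    by (intro tendsto_intros)
  have lim': "((\<lambda>t. ennreal (exp (1/4) * (t + 4 * sqrt t) * m)) \<longlongrightarrow> 0) (at_right 0)"
    using tendsto_ennrealI[OF lim] by simp
  have ev2: "\<forall>\<^sub>F t in at_right 0. f t \<le> ennreal (exp (1/4) * (t + 4 * sqrt t) * m)"
  proof -
    have "\<forall>\<^sub>F t in at_right (0::real). 0 < t" by (simp add: eventually_at_right_less)
    with ev show ?thesis
    proof eventually_elim
      case (elim t)
      then have "ennreal (exp (1/4) * (t + 4 * sqrt t)) * M = ennreal (exp (1/4) * (t + 4 * sqrt t) * m)"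
        unfolding m(1) using m(2) elim by (intro ennreal_mult[symmetric]) auto
      then show ?case using elim by simp
    qed
  qed
  show ?thesis
    by (rule tendsto_sandwich[OF _ ev2 tendsto_const lim']) auto
qed

lemma ev_exists:
  fixes f :: "real \<Rightarrow> ennreal"
  assumes "(f \<longlongrightarrow> 0) (at_right 0)"
  shows "\<exists>t>0. f t < \<infinity>"
proof -
  have "\<forall>\<^sub>F t in at_right (0::real). f t < 1"
    using order_tendstoD(2)[OF assms, of 1] by simp
  then obtain b where b: "b > 0" "\<And>y. y > 0 \<Longrightarrow> y < b \<Longrightarrow> f y < 1"
    unfolding eventually_at_right_field by auto
  then have "f (b/2) < 1" by simp
  then have "f (b/2) < \<infinity>" unfolding infinity_ennreal_def by (rule less_trans[OF _ ennreal_one_less_top])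
  moreover have "b/2 > 0" using b by simp
  ultimately show ?thesis by blast
qed

lemma lower_finite:
  assumes C: "0 < C" and le: "\<And>x. ennreal C * Iloc V x \<le> B" and B: "B < \<infinity>"
  shows "Mloc V < \<infinity>"
proof -
  have "ennreal C * Mloc V = (SUP x. ennreal C * Iloc V x)"
    unfolding Mloc_def Iloc_def by (rule SUP_mult_left_ennreal)
  also have "\<dots> \<le> B" by (rule SUP_least) (rule le)
  finally have "ennreal C * Mloc V < \<infinity>" using B by (rule le_less_trans)
  then show ?thesis using C by (auto simp: ennreal_mult_less_top)
qed

lemma Mloc_eq: "Mloc V = (SUP x. \<integral>\<^sup>+ z. ennreal \<bar>V z\<bar> * indicator {x - 1..x + 1} z \<partial>lborel)"
  by (simp add: Mloc_def)

lemma S_norm_upper: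
  assumes V: "V \<in> borel_measurable borel" and T: "0 < T"
  shows "S_norm V T \<le> ennreal (exp (1/4) * (T + 4 * sqrt T)) * Mloc V"
  unfolding S_norm_def
proof (intro SUP_least)
  fix t x y assume t: "t \<in> {0<..T}"
  have "S_fun V t x y \<le> ennreal (exp (1/4) * (t + 4 * sqrt t)) * Mloc V"
    using t by (intro S_upper[OF V]) auto
  also have "\<dots> \<le> ennreal (exp (1/4) * (T + 4 * sqrt T)) * Mloc V"
    using t by (intro mult_right_mono ennreal_leI mult_left_mono add_mono) auto
  finally show "S_fun V t x y \<le> ennreal (exp (1/4) * (T + 4 * sqrt T)) * Mloc V" .
qed

lemma c_imp_a:
  assumes V: "V \<in> borel_measurable borel" and M: "Mloc V < \<infinity>"
  shows "kato_class V"
  unfolding kato_class_def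
proof (rule bound_tendsto[OF _ M])
  have "\<forall>\<^sub>F t in at_right (0::real). 0 < t" by (simp add: eventually_at_right_less)
  then show "\<forall>\<^sub>F t in at_right 0. (SUP x. kato_int V t x) \<le> ennreal (exp (1/4) * (t + 4 * sqrt t)) * Mloc V"
    by eventually_elim (intro SUP_least kato_upper[OF V])
qed

lemma b_imp_c:
  assumes V: "V \<in> borel_measurable borel" and h: "kato_hat_class V"
  shows "Mloc V < \<infinity>"
proof -
  obtain t where t: "t > 0" "(SUP x. kato_int V t x) < \<infinity>" using h unfolding kato_hat_class_def by auto
  obtain C where C: "C > 0" "\<And>x. ennreal C * Iloc V x \<le> kato_int V t x"
    using kato_lower[OF V t(1)] by auto
  show ?thesis
  proof (rule lower_finite[OF C(1) _ t(2)])
    fix x show "ennreal C * Iloc V x \<le> (SUP x. kato_int V t x)"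
      using C(2)[of x] by (rule order_trans) (rule SUP_upper, simp)
  qed
qed

lemma e_imp_c:
  assumes V: "V \<in> borel_measurable borel" and T: "0 < T" "S_norm V T < \<infinity>"
  shows "Mloc V < \<infinity>"
proof -
  obtain C where C: "C > 0" "\<And>x. ennreal C * Iloc V x \<le> S_fun V T x x"
    using S_lower[OF V T(1)] by auto
  show ?thesis
  proof (rule lower_finite[OF C(1) _ T(2)])
    fix x
    have "S_fun V T x x \<le> S_norm V T"
      unfolding S_norm_def using T(1)
      by (intro SUP_upper2[where i = T] SUP_upper2[where i = x] SUP_upper) auto
    then show "ennreal C * Iloc V x \<le> S_norm V T"
      using C(2)[of x] by (rule order_trans[rotated])
  qed
qed

theorem corollary5p4:
  fixes V :: "real \<Rightarrow> real"
  assumes "V \<in> borel_measurable borel"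
  shows "(kato_class V \<longleftrightarrow> kato_hat_class V)
    \<and> (kato_class V \<longleftrightarrow>
         (SUP x. \<integral>\<^sup>+ z. ennreal \<bar>V z\<bar> * indicator {x - 1..x + 1} z \<partial>lborel) < \<infinity>)
    \<and> (kato_class V \<longleftrightarrow> ((\<lambda>T. S_norm V T) \<longlongrightarrow> 0) (at_right 0))
    \<and> (kato_class V \<longleftrightarrow> (\<exists>T>0. S_norm V T < \<infinity>))
    \<and> (kato_class V \<longleftrightarrow> (\<forall>T>0. S_norm V T < \<infinity>))"
proof -
  note V = assms
  have ab: "kato_class V \<Longrightarrow> kato_hat_class V"
    unfolding kato_class_def kato_hat_class_def by (rule ev_exists)
  have bc: "kato_hat_class V \<Longrightarrow> Mloc V < \<infinity>" by (rule b_imp_c[OF V])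
  have ca: "Mloc V < \<infinity> \<Longrightarrow> kato_class V" by (rule c_imp_a[OF V])
  have cd: "((\<lambda>T. S_norm V T) \<longlongrightarrow> 0) (at_right 0)" if M: "Mloc V < \<infinity>"
  proof (rule bound_tendsto[OF _ M])
    have "\<forall>\<^sub>F t in at_right (0::real). 0 < t" by (simp add: eventually_at_right_less)
    then show "\<forall>\<^sub>F t in at_right 0. S_norm V t \<le> ennreal (exp (1/4) * (t + 4 * sqrt t)) * Mloc V"
      by eventually_elim (rule S_norm_upper[OF V])
  qed
  have de: "((\<lambda>T. S_norm V T) \<longlongrightarrow> 0) (at_right 0) \<Longrightarrow> \<exists>T>0. S_norm V T < \<infinity>"
    by (rule ev_exists)
  have ec: "\<exists>T>0. S_norm V T < \<infinity> \<Longrightarrow> Mloc V < \<infinity>"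
    using e_imp_c[OF V] by blast
  have ce2: "\<forall>T>0. S_norm V T < \<infinity>" if M: "Mloc V < \<infinity>"
  proof (intro allI impI)
    fix T :: real assume T: "0 < T"
    have "S_norm V T \<le> ennreal (exp (1/4) * (T + 4 * sqrt T)) * Mloc V" by (rule S_norm_upper[OF V T])
    also have "\<dots> < \<infinity>" using M by (simp add: ennreal_mult_less_top)
    finally show "S_norm V T < \<infinity>" .
  qed
  have e2e: "\<forall>T>0. S_norm V T < \<infinity> \<Longrightarrow> \<exists>T>0. S_norm V T < \<infinity>"
    by (metis zero_less_one)
  show ?thesis
    unfolding Mloc_eq[symmetric]
    using ab bc ca cd de ec ce2 e2e by blast
qed

end
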